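(* Let $m\ge 2$, let $B$ be a blocker in $CK(2m)$, and let $e=[i,j]\in B$ with $0\le i<j\le 2m-1$, so that $j-i-1=2k$ and $2m-(j-i)-1=2l$ with $k,l\ge 0$, $k+l=m-1$. Let $G_1^+$ be the complete convex geometric graph on the vertices $i,i+1,\dots,j$ and $G_2^+$ the one on the vertices $j,j+1,\dots,2m-1,0,1,\dots,i$. Then $B\cap E(G_1^+)$ is a blocker in $G_1^+$ (a blocking set with exactly $k+1$ edges), $B\cap E(G_2^+)$ is a blocker in $G_2^+$ (a blocking set with exactly $l+1$ edges), and no edge of $B$ crosses $e$ in an interior point. Consequently $B$ is crossing-free.
   Context: $CK(2m)$ denotes the complete convex geometric graph whose vertices are the $2m$ vertices of a convex polygon, labelled cyclically $0,1,\dots,2m-1$, and whose edges are all straight segments between pairs of vertices. Two edges with four distinct endpoints cross iff their endpoints alternate in the cyclic order. For a set of $2n$ points in convex position, consider the complete convex geometric graph on them; an SPM is a set of $n$ pairwise disjoint edges (no common endpoint and no crossing), a blocking set is a set of edges containing at least one edge of every SPM, and a blocker is a blocking set of exactly $n$ edges. $E(H)$ denotes the edge set of $H$. *)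

theory Defs
  imports Main
begin

text \<open>Vertices of CK(2m) are the labels 0..2m-1 (natural numbers); a geometric
graph on a subset V of these labels inherits the cyclic (convex) order.
Edges are 2-element sets of vertices.\<close>

definition cgg_edges :: "nat set \<Rightarrow> nat set set" where
  "cgg_edges V = {{a, b} | a b. a \<in> V \<and> b \<in> V \<and> a \<noteq> b}"

text \<open>Two edges cross iff they have four distinct endpoints alternating in
the cyclic order; for labels this is the linear interleaving a < c < b < d.\<close>

definition crosses :: "nat set \<Rightarrow> nat set \<Rightarrow> bool" where
  "crosses e f \<longleftrightarrow> (\<exists>a b c d. e = {a, b} \<and> f = {c, d} \<and>
      ((a < c \<and> c < b \<and> b < d) \<or> (c < a \<and> a < d \<and> d < b)))"

definition SPM :: "nat set \<Rightarrow> nat set set \<Rightarrow> bool" where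
  "SPM V M \<longleftrightarrow> M \<subseteq> cgg_edges V \<and> card M = card V div 2 \<and>
     (\<forall>e\<in>M. \<forall>f\<in>M. e \<noteq> f \<longrightarrow> e \<inter> f = {} \<and> \<not> crosses e f)"

definition blocking_set :: "nat set \<Rightarrow> nat set set \<Rightarrow> bool" where
  "blocking_set V S \<longleftrightarrow> S \<subseteq> cgg_edges V \<and> (\<forall>M. SPM V M \<longrightarrow> S \<inter> M \<noteq> {})"

definition blocker :: "nat set \<Rightarrow> nat set set \<Rightarrow> bool" where
  "blocker V S \<longleftrightarrow> blocking_set V S \<and> card S = card V div 2"

end

theory Submission
  imports Defs
begin


lemma crosses_sym: "crosses e f \<longleftrightarrow> crosses f e"
  unfolding crosses_def by blast

lemma cr_intro: "a<c \<Longrightarrow> c<b \<Longrightarrow> b<(d::nat) \<Longrightarrow> crosses {a,b} {c,d}"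
  unfolding crosses_def by blast

lemma crosses_iff:
  "crosses {x,y} {u,v} \<longleftrightarrow>
    (x<u \<and> u<y \<and> y<v) \<or> (x<v \<and> v<y \<and> y<u) \<or> (y<u \<and> u<x \<and> x<v) \<or> (y<v \<and> v<x \<and> x<u) \<or>
    (u<x \<and> x<v \<and> v<y) \<or> (u<y \<and> y<v \<and> v<x) \<or> (v<x \<and> x<u \<and> u<y) \<or> (v<y \<and> y<u \<and> u<x)"
  (is "?L \<longleftrightarrow> ?R")
proof
  assume ?L
  then obtain a b c d where "{x,y} = {a,b}" "{u,v} = {c,d}"
    "(a < c \<and> c < b \<and> b < d) \<or> (c < a \<and> a < d \<and> d < b)"
    unfolding crosses_def by blast
  then show ?R by (auto simp: doubleton_eq_iff)
next
  assume ?R then show ?L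
    by (elim disjE; metis cr_intro crosses_sym insert_commute)
qed

definition smono :: "nat \<Rightarrow> (nat \<Rightarrow> nat) \<Rightarrow> bool" where
  "smono n f \<longleftrightarrow> (\<forall>x y. x < y \<longrightarrow> y < 2*n \<longrightarrow> f x < f y)"

lemma smono_less: "smono n f \<Longrightarrow> x < 2*n \<Longrightarrow> y < 2*n \<Longrightarrow> f x < f y \<longleftrightarrow> x < y"
  unfolding smono_def by (metis less_asym linorder_neqE_nat)

lemma smono_eq: "smono n f \<Longrightarrow> x < 2*n \<Longrightarrow> y < 2*n \<Longrightarrow> f x = f y \<longleftrightarrow> x = y"
  unfolding smono_def by (metis less_irrefl linorder_neqE_nat)

lemma cross_transfer: "smono n f \<Longrightarrow> x < 2*n \<Longrightarrow> y < 2*n \<Longrightarrow> u < 2*n \<Longrightarrow> v < 2*n \<Longrightarrow>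
  crosses {f x, f y} {f u, f v} \<longleftrightarrow> crosses {x,y} {u,v}"
  by (simp add: crosses_iff smono_less)

lemma dbl_transfer: "smono n f \<Longrightarrow> x < 2*n \<Longrightarrow> y < 2*n \<Longrightarrow> u < 2*n \<Longrightarrow> v < 2*n \<Longrightarrow>
  {f x, f y} = {f u, f v} \<longleftrightarrow> {x,y} = {u,v}"
  by (simp add: doubleton_eq_iff smono_eq)

definition aidx :: "nat \<Rightarrow> nat \<Rightarrow> nat \<Rightarrow> nat" where
  "aidx n t s = (if s \<le> t then t - s else t + 2*n - s)"

definition PP :: "(nat \<Rightarrow> nat) \<Rightarrow> nat \<Rightarrow> nat \<Rightarrow> nat set set" where
  "PP f n t = (\<lambda>s. {f (aidx n t s), f (t+1+s)}) ` {..<n}"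

lemma aidx_lt: "t<n \<Longrightarrow> s<n \<Longrightarrow> aidx n t s < 2*n"
  unfolding aidx_def by auto

lemma aidx_ne: "t<n \<Longrightarrow> s<n \<Longrightarrow> aidx n t s \<noteq> t+1+s"
  unfolding aidx_def by presburger

lemma aidx_sum: "t<n \<Longrightarrow> s<n \<Longrightarrow>
   aidx n t s + (t+1+s) = 2*t+1 \<or> aidx n t s + (t+1+s) = 2*t+1+2*n"
  unfolding aidx_def by auto

lemma idx_disj: "t<n \<Longrightarrow> s<n \<Longrightarrow> s'<n \<Longrightarrow> s\<noteq>s' \<Longrightarrow>
   {aidx n t s, t+1+s} \<inter> {aidx n t s', t+1+s'} = {}"
  unfolding aidx_def by (auto split: if_splits)

lemma idx_nocross: "t<n \<Longrightarrow> s<n \<Longrightarrow> s'<n \<Longrightarrow> s\<noteq>s' \<Longrightarrow>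
   \<not> crosses {aidx n t s, t+1+s} {aidx n t s', t+1+s'}"
  unfolding aidx_def crosses_iff by (auto split: if_splits)



lemma cgg_E: "e \<in> cgg_edges V \<Longrightarrow> \<exists>a b. e = {a,b} \<and> a<b \<and> a\<in>V \<and> b\<in>V"
  unfolding cgg_edges_def
  by (auto, metis insert_commute linorder_neqE_nat)

lemma cgg_sub: "e \<in> cgg_edges V \<Longrightarrow> e \<subseteq> V"
  unfolding cgg_edges_def by auto

lemma cgg_card: "e \<in> cgg_edges V \<Longrightarrow> card e = 2"
  unfolding cgg_edges_def by auto

lemma cgg_mono: "V \<subseteq> W \<Longrightarrow> cgg_edges V \<subseteq> cgg_edges W"
  unfolding cgg_edges_def by blast

lemma cgg_finite: "finite V \<Longrightarrow> finite (cgg_edges V)"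
proof -
  assume "finite V"
  moreover have "cgg_edges V \<subseteq> Pow V" unfolding cgg_edges_def by auto
  ultimately show ?thesis by (meson finite_Pow_iff finite_subset)
qed

lemma PP_mem: "x \<in> PP f n t \<longleftrightarrow> (\<exists>s<n. x = {f (aidx n t s), f (t+1+s)})"
  unfolding PP_def by auto

lemma PP_SPM:
  assumes sm: "smono n f" and t: "t<n"
  shows "SPM (f ` {0..<2*n}) (PP f n t)"
proof -
  have inj: "inj_on f {0..<2*n}" using smono_eq[OF sm] by (auto simp: inj_on_def)
  have cV: "card (f ` {0..<2*n}) div 2 = n" using card_image[OF inj] by simp
  have sub: "PP f n t \<subseteq> cgg_edges (f ` {0..<2*n})"
  proof
    fix x assume "x \<in> PP f n t"
    then obtain s where s: "s<n" "x = {f (aidx n t s), f (t+1+s)}" by (auto simp: PP_mem)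
    have "f (aidx n t s) \<noteq> f (t+1+s)"
      using smono_eq[OF sm aidx_lt[OF t s(1)], of "t+1+s"] aidx_ne[OF t s(1)] s(1) t by auto
    moreover have "f (aidx n t s) \<in> f ` {0..<2*n}" "f (t+1+s) \<in> f ` {0..<2*n}"
      using aidx_lt[OF t s(1)] s(1) t by auto
    ultimately show "x \<in> cgg_edges (f ` {0..<2*n})" unfolding cgg_edges_def
      using s(2) by blast
  qed
  have neq: "{f (aidx n t s), f (t+1+s)} \<inter> {f (aidx n t s'), f (t+1+s')} = {} \<and>
        \<not> crosses {f (aidx n t s), f (t+1+s)} {f (aidx n t s'), f (t+1+s')}"
    if "s<n" "s'<n" "s\<noteq>s'" for s s'
  proof -
    have r: "aidx n t s < 2*n" "t+1+s < 2*n" "aidx n t s' < 2*n" "t+1+s' < 2*n"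
      using aidx_lt[OF t] that t by auto
    have "{aidx n t s, t+1+s} \<inter> {aidx n t s', t+1+s'} = {}" using idx_disj[OF t that] .
    then have d: "{f (aidx n t s), f (t+1+s)} \<inter> {f (aidx n t s'), f (t+1+s')} = {}"
      using smono_eq[OF sm] r by auto
    show ?thesis using d idx_nocross[OF t that] cross_transfer[OF sm r] by simp
  qed
  have injP: "inj_on (\<lambda>s. {f (aidx n t s), f (t+1+s)}) {..<n}"
  proof (rule inj_onI)
    fix s s' assume "s \<in> {..<n}" "s' \<in> {..<n}" and eq: "{f (aidx n t s), f (t+1+s)} = {f (aidx n t s'), f (t+1+s')}"
    then show "s = s'" using neq[of s s'] by auto
  qed
  have cP: "card (PP f n t) = n" unfolding PP_def using card_image[OF injP] by simp
  have pw: "\<forall>e\<in>PP f n t. \<forall>g\<in>PP f n t. e \<noteq> g \<longrightarrow> e \<inter> g = {} \<and> \<not> crosses e g"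
    unfolding PP_def using neq by auto
  show ?thesis unfolding SPM_def using sub cV cP pw by simp
qed

lemma PP_disj:
  assumes sm: "smono n f" and t: "t<n" "t'<n" "t\<noteq>t'"
  shows "PP f n t \<inter> PP f n t' = {}"
proof (rule ccontr)
  assume "PP f n t \<inter> PP f n t' \<noteq> {}"
  then obtain s s' where s: "s<n" "s'<n" and eq: "{f (aidx n t s), f (t+1+s)} = {f (aidx n t' s'), f (t'+1+s')}"
    by (auto simp: PP_mem)
  have "{aidx n t s, t+1+s} = {aidx n t' s', t'+1+s'}"
    using dbl_transfer[OF sm aidx_lt[OF t(1) s(1)] _ aidx_lt[OF t(2) s(2)], of "t+1+s" "t'+1+s'"] eq s t by auto
  then have "aidx n t s + (t+1+s) = aidx n t' s' + (t'+1+s')" by (auto simp: doubleton_eq_iff)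
  then show False using aidx_sum[OF t(1) s(1)] aidx_sum[OF t(2) s(2)] t by auto
qed

lemma hit:
  assumes fin: "finite S" and h: "\<forall>t<n. S \<inter> C t \<noteq> {}"
    and d: "\<forall>t<n. \<forall>t'<n. t\<noteq>t' \<longrightarrow> C t \<inter> C t' = {}"
  shows "n \<le> card S"
proof -
  define g where "g t = (SOME x. x \<in> S \<inter> C t)" for t
  have g: "g t \<in> S \<inter> C t" if "t<n" for t
    unfolding g_def using h that by (metis all_not_in_conv someI_ex)
  have "inj_on g {..<n}"
  proof (rule inj_onI)
    fix t t' assume "t \<in> {..<n}" "t' \<in> {..<n}" "g t = g t'"
    then show "t = t'" using g[of t] g[of t'] d by auto
  qed
  moreover have "g ` {..<n} \<subseteq> S" using g by auto
  ultimately show ?thesis using card_inj_on_le[of g "{..<n}" S] fin by simp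
qed

lemma lower:
  assumes sm: "smono n f" and bs: "blocking_set (f ` {0..<2*n}) S"
  shows "n \<le> card S"
proof -
  have fin: "finite S" using bs cgg_finite[of "f ` {0..<2*n}"] unfolding blocking_set_def
    using finite_subset by blast
  have "\<forall>t<n. S \<inter> PP f n t \<noteq> {}" using bs PP_SPM[OF sm] unfolding blocking_set_def by blast
  then show ?thesis using hit[OF fin, of n "PP f n"] PP_disj[OF sm] by blast
qed

lemma disj_card:
  assumes fin: "finite M" and c2: "\<forall>e\<in>M. card e = 2"
    and d: "\<forall>e\<in>M. \<forall>f\<in>M. e\<noteq>f \<longrightarrow> e \<inter> f = {}" and W: "\<Union>M \<subseteq> W" "finite W"
  shows "2 * card M \<le> card W"
proof -
  have fe: "\<And>A. A \<in> M \<Longrightarrow> finite A" using c2 card.infinite by fastforce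
  have "card (\<Union>M) = sum card M"
    by (rule card_Union_disjoint) (use d fe in \<open>auto simp: pairwise_def disjnt_def\<close>)
  also have "\<dots> = 2 * card M" using c2 by simp
  finally show ?thesis using card_mono[OF W(2) W(1)] by simp
qed

lemma sep1: "g \<subseteq> {i..j} \<Longrightarrow> h \<inter> {i..(j::nat)} = {} \<Longrightarrow> \<not> crosses g h"
  unfolding crosses_def by (auto; fastforce)

lemma sep2: "g \<inter> {i<..<j} = {} \<Longrightarrow> h \<subseteq> {i<..<(j::nat)} \<Longrightarrow> \<not> crosses g h"
  unfolding crosses_def by (auto; fastforce)

lemma sep3: "i < j \<Longrightarrow> f \<subseteq> {i..j} \<Longrightarrow> \<not> crosses f {i,(j::nat)}"
  unfolding crosses_def by (auto simp: doubleton_eq_iff)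

lemma sep4: "i < j \<Longrightarrow> f \<inter> {i<..<j} = {} \<Longrightarrow> \<not> crosses f {i,(j::nat)}"
  unfolding crosses_def by (auto simp: doubleton_eq_iff)



lemma core:
  fixes m i j :: nat and B :: "nat set set"
  assumes m2: "m \<ge> 2" and bl: "blocker {0..<2*m} B" and ij: "i<j" and jm: "j \<le> 2*m-1"
    and eB: "{i,j} \<in> B"
  shows "odd (j - i) \<and> blocking_set {i..j} (B \<inter> cgg_edges {i..j}) \<and>
     blocking_set ({j..<2*m} \<union> {0..i}) (B \<inter> cgg_edges ({j..<2*m} \<union> {0..i})) \<and>
     card (B \<inter> cgg_edges {i..j}) = (j-i-1) div 2 + 1 \<and>
     card (B \<inter> cgg_edges ({j..<2*m} \<union> {0..i})) = (2*m-(j-i)-1) div 2 + 1 \<and>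
     (\<forall>f\<in>B. \<not> crosses f {i,j})"
proof -
  define e where "e = {i,j}"
  define G2 where "G2 = {j..<2*m} \<union> {0..i}"
  define B1 where "B1 = B \<inter> cgg_edges {i..j}"
  define B2 where "B2 = B \<inter> cgg_edges G2"
  have cardB: "card B = m" using bl by (simp add: blocker_def)
  have finB: "finite B" using cardB m2 card.infinite by fastforce
  have blk: "blocking_set {0..<2*m} B" using bl blocker_def by simp
  have smid: "smono m id" by (simp add: smono_def)
  have imid: "id ` {0..<2*m} = {0..<2*m}" by simp
  have spm: "\<And>t. t<m \<Longrightarrow> SPM {0..<2*m} (PP id m t)" using PP_SPM[OF smid] imid by metis
  have hitB: "\<And>t. t<m \<Longrightarrow> B \<inter> PP id m t \<noteq> {}" using blk spm blocking_set_def by blast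
  have disjP: "\<forall>t<m. \<forall>t'<m. t\<noteq>t' \<longrightarrow> PP id m t \<inter> PP id m t' = {}" using PP_disj[OF smid] by blast
  have noremove: "\<not> (\<forall>t<m. (B - {g}) \<inter> PP id m t \<noteq> {})" if gB: "g \<in> B" for g
  proof
    assume "\<forall>t<m. (B - {g}) \<inter> PP id m t \<noteq> {}"
    then have "m \<le> card (B - {g})" using hit[of "B - {g}" m "PP id m"] finB disjP by blast
    moreover have "card (B - {g}) = m - 1" using gB cardB finB by simp
    ultimately show False using m2 by simp
  qed
  have eB': "e \<in> B" using eB e_def by simp
  have oddij: "odd (i+j)"
  proof (rule ccontr)
    assume ev: "\<not> odd (i+j)"
    have "\<forall>t<m. (B - {e}) \<inter> PP id m t \<noteq> {}"
    proof (intro allI impI)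
      fix t assume t: "t<m"
      obtain x where x: "x \<in> B" "x \<in> PP id m t" using hitB[OF t] by blast
      have "x \<noteq> e"
      proof
        assume "x = e"
        then have "e \<in> PP id m t" using x(2) by simp
        then obtain s where s: "s<m" "{i,j} = {aidx m t s, t+1+s}" unfolding PP_mem e_def id_def by blast
        then have "i + j = aidx m t s + (t+1+s)" by (auto simp: doubleton_eq_iff)
        then have "i + j = 2*t+1 \<or> i + j = 2*(t+m)+1" using aidx_sum[OF t s(1)] by simp
        then have "odd (i+j)" by (elim disjE) simp_all
        then show False using ev by blast
      qed
      then show "(B - {e}) \<inter> PP id m t \<noteq> {}" using x by blast
    qed
    then show False using noremove[OF eB'] by blast
  qed
  have "\<exists>t<m. e \<in> PP id m t"
  proof (cases "i+j < 2*m")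
    case True
    define t where "t = (i+j) div 2"
    have t2: "i+j = 2*t+1" using oddij t_def by presburger
    define s where "s = j - t - 1"
    have st: "s < m" "aidx m t s = i" "t+1+s = j" "t < m"
      using t2 True ij jm unfolding s_def aidx_def by auto
    have "e \<in> PP id m t" unfolding PP_mem e_def id_def
      by (rule exI[of _ s]) (use st in auto)
    then show ?thesis using st(4) by blast
  next
    case False
    define t where "t = (i+j-2*m) div 2"
    have t2: "i+j = 2*t+1+2*m" using oddij t_def False by presburger
    define s where "s = i - t - 1"
    have st0: "t < s" "s < m" "t+1+s = i" "t < m"
      using t2 False ij jm unfolding s_def by linarith+
    have st: "s < m" "aidx m t s = j" "t+1+s = i" "t < m"
      using st0 t2 unfolding aidx_def by auto
    have "e \<in> PP id m t" unfolding PP_mem e_def id_def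
      by (rule exI[of _ s]) (use st in \<open>auto simp: doubleton_eq_iff\<close>)
    then show ?thesis using st(4) by blast
  qed
  then obtain t where tm: "t<m" and eQ: "e \<in> PP id m t" by blast
  define Q where "Q = PP id m t"
  have uniq: "g = e" if "g \<in> B" "g \<in> Q" for g
  proof (rule ccontr)
    assume ge: "g \<noteq> e"
    have "\<forall>t'<m. (B - {g}) \<inter> PP id m t' \<noteq> {}"
    proof (intro allI impI)
      fix t' assume t': "t'<m"
      show "(B - {g}) \<inter> PP id m t' \<noteq> {}"
      proof (cases "t' = t")
        case True
        have "e \<in> (B - {g}) \<inter> PP id m t'" using True eQ eB' ge by simp
        then show ?thesis by blast
      next
        case False
        obtain x where x: "x \<in> B" "x \<in> PP id m t'" using hitB[OF t'] by blast
        have dd: "PP id m t' \<inter> PP id m t = {}" using disjP[rule_format, OF t' tm False] .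
        have gQ: "g \<in> PP id m t" using that(2) unfolding Q_def .
        have "x \<noteq> g" using x(2) gQ dd by blast
        then show ?thesis using x by blast
      qed
    qed
    then show False using noremove[OF that(1)] by blast
  qed
  have SQ: "SPM {0..<2*m} Q" using spm[OF tm] Q_def by simp
  have Qsub: "Q \<subseteq> cgg_edges {0..<2*m}" and cardQ: "card Q = m"
    and Qpw: "\<forall>g\<in>Q. \<forall>h\<in>Q. g \<noteq> h \<longrightarrow> g \<inter> h = {} \<and> \<not> crosses g h"
    using SQ unfolding SPM_def by auto
  have finQ: "finite Q" using Qsub cgg_finite[of "{0..<2*m}"] finite_subset by blast
  define Q1 where "Q1 = {g\<in>Q. g \<subseteq> {i<..<j}}"
  define Q2 where "Q2 = {g\<in>Q. g \<inter> {i..j} = {}}"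
  have eQ': "e \<in> Q" using eQ Q_def by simp
  have split: "Q \<subseteq> insert e (Q1 \<union> Q2)"
  proof
    fix g assume gQ: "g \<in> Q"
    show "g \<in> insert e (Q1 \<union> Q2)"
    proof (cases "g = e")
      case True then show ?thesis by simp
    next
      case False
      have d: "g \<inter> e = {}" and nc: "\<not> crosses g e" using Qpw gQ eQ' False by auto
      obtain x y where xy: "g = {x,y}" "x<y" using cgg_E gQ Qsub by blast
      have "x \<noteq> i" "x \<noteq> j" "y \<noteq> i" "y \<noteq> j" using d xy e_def by auto
      moreover have "\<not> (x<i \<and> i<y \<and> y<j)" "\<not> (i<x \<and> x<j \<and> j<y)"
        using nc xy e_def crosses_iff by auto
      ultimately have "g \<subseteq> {i<..<j} \<or> g \<inter> {i..j} = {}" using xy ij by auto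
      then show ?thesis using gQ unfolding Q1_def Q2_def by auto
    qed
  qed
  have c2Q: "\<forall>g\<in>Q. card g = 2" using Qsub cgg_card by blast
  have dQ: "\<forall>g\<in>Q. \<forall>h\<in>Q. g \<noteq> h \<longrightarrow> g \<inter> h = {}" using Qpw by blast
  have Q1Q: "Q1 \<subseteq> Q" and Q2Q: "Q2 \<subseteq> Q" unfolding Q1_def Q2_def by auto
  have finQ1: "finite Q1" and finQ2: "finite Q2" using finQ Q1Q Q2Q finite_subset by blast+
  have cQ1: "2 * card Q1 \<le> j - i - 1"
  proof -
    have u: "\<Union>Q1 \<subseteq> {i<..<j}" unfolding Q1_def by blast
    have "2 * card Q1 \<le> card {i<..<j}"
      by (rule disj_card[OF finQ1 _ _ u]) (use c2Q dQ Q1Q in blast)+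
    then show ?thesis by simp
  qed
  have cW: "card ({0..<2*m} - {i..j}) = 2*m - (j+1-i)"
  proof -
    have "{i..j} \<subseteq> {0..<2*m}" using ij jm by auto
    then show ?thesis using card_Diff_subset[of "{i..j}" "{0..<2*m}"] ij jm by auto
  qed
  have cQ2: "2 * card Q2 \<le> 2*m - (j+1-i)"
  proof -
    have u: "\<Union>Q2 \<subseteq> {0..<2*m} - {i..j}" using Qsub cgg_sub unfolding Q2_def by blast
    have "2 * card Q2 \<le> card ({0..<2*m} - {i..j})"
      by (rule disj_card[OF finQ2 _ _ u]) (use c2Q dQ Q2Q in blast)+
    then show ?thesis using cW by simp
  qed
  have "card Q \<le> card (insert e (Q1 \<union> Q2))"
    by (rule card_mono) (use finQ1 finQ2 split in auto)
  also have "\<dots> \<le> Suc (card (Q1 \<union> Q2))" by (simp add: card_insert_if finQ1 finQ2)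
  also have "\<dots> \<le> Suc (card Q1 + card Q2)" using card_Un_le by simp
  finally have cm: "m \<le> Suc (card Q1 + card Q2)" using cardQ by simp
  have eq1: "2 * card Q1 = j - i - 1" and eq2: "2 * card Q2 = 2*m - (j+1-i)"
    and eqm: "m = card Q1 + card Q2 + 1"
    using cm cQ1 cQ2 ij jm by arith+
  have oddji: "odd (j - i)" using eq1 ij by presburger
  have ijsub: "{i..j} \<subseteq> {0..<2*m}" using ij jm by auto
  have G2sub: "G2 \<subseteq> {0..<2*m}" using ij jm unfolding G2_def by auto
  have G2dis: "G2 \<inter> {i<..<j} = {}" unfolding G2_def by auto
  have ne2: "g \<noteq> {}" if "g \<in> cgg_edges V" for g V using cgg_card[OF that] by auto
  have bs1: "blocking_set {i..j} B1"
    unfolding blocking_set_def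
  proof (intro conjI allI impI)
    show "B1 \<subseteq> cgg_edges {i..j}" unfolding B1_def by blast
    fix M assume SM: "SPM {i..j} M"
    show "B1 \<inter> M \<noteq> {}"
    proof
      assume em: "B1 \<inter> M = {}"
      have Msub: "M \<subseteq> cgg_edges {i..j}" and cM: "card M = card {i..j} div 2"
        and Mpw: "\<forall>g\<in>M. \<forall>h\<in>M. g \<noteq> h \<longrightarrow> g \<inter> h = {} \<and> \<not> crosses g h"
        using SM unfolding SPM_def by auto
      have BM: "B \<inter> M = {}" using em Msub unfolding B1_def by blast
      have finM: "finite M" using Msub cgg_finite[of "{i..j}"] finite_subset by blast
      have cM': "card M = card Q1 + 1" using cM eq1 ij by simp
      have MQ: "M \<inter> Q2 = {}"
      proof (rule ccontr)
        assume "M \<inter> Q2 \<noteq> {}" then obtain g where g: "g \<in> M" "g \<in> Q2" by blast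
        then have "g \<subseteq> {i..j}" "g \<inter> {i..j} = {}" "g \<noteq> {}"
          using Msub cgg_sub ne2 unfolding Q2_def by blast+
        then show False by blast
      qed
      have pw: "\<forall>g\<in>M \<union> Q2. \<forall>h\<in>M \<union> Q2. g \<noteq> h \<longrightarrow> g \<inter> h = {} \<and> \<not> crosses g h"
      proof (intro ballI impI)
        fix g h assume g: "g \<in> M \<union> Q2" and h: "h \<in> M \<union> Q2" and gh: "g \<noteq> h"
        show "g \<inter> h = {} \<and> \<not> crosses g h"
        proof (cases "g \<in> M")
          case gM: True
          show ?thesis
          proof (cases "h \<in> M")
            case True then show ?thesis using Mpw gM gh by blast
          next
            case False
            then have "h \<in> Q2" using h by blast
            then have hh: "h \<inter> {i..j} = {}" unfolding Q2_def by blast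
            have gg: "g \<subseteq> {i..j}" using gM Msub cgg_sub by blast
            show ?thesis using sep1[OF gg hh] gg hh by blast
          qed
        next
          case gM: False
          then have gQ: "g \<in> Q2" using g by blast
          then have gg: "g \<inter> {i..j} = {}" unfolding Q2_def by blast
          show ?thesis
          proof (cases "h \<in> M")
            case True
            have hh: "h \<subseteq> {i..j}" using True Msub cgg_sub by blast
            show ?thesis using sep1[OF hh gg] crosses_sym gg hh by blast
          next
            case False
            then have "h \<in> Q2" using h by blast
            then show ?thesis using gQ Qpw gh unfolding Q2_def by blast
          qed
        qed
      qed
      have SU: "SPM {0..<2*m} (M \<union> Q2)"
      proof -
        have "M \<union> Q2 \<subseteq> cgg_edges {0..<2*m}" using Msub cgg_mono[OF ijsub] Q2Q Qsub by blast
        moreover have "card (M \<union> Q2) = card {0..<2*m} div 2"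
          using card_Un_disjoint[OF finM finQ2 MQ] cM' eqm by simp
        ultimately show ?thesis unfolding SPM_def using pw by blast
      qed
      then have "B \<inter> (M \<union> Q2) \<noteq> {}" using blk unfolding blocking_set_def by blast
      then obtain g where "g \<in> B" "g \<in> Q2" using BM by blast
      then have "g = e" "g \<inter> {i..j} = {}" using uniq Q2Q unfolding Q2_def by blast+
      then show False using e_def ij by auto
    qed
  qed
  have cG2: "card G2 = (2*m - j) + (i+1)"
  proof -
    have "{j..<2*m} \<inter> {0..i} = {}" using ij by auto
    then show ?thesis unfolding G2_def using card_Un_disjoint[of "{j..<2*m}" "{0..i}"] by simp
  qed
  have bs2: "blocking_set G2 B2"
    unfolding blocking_set_def
  proof (intro conjI allI impI)
    show "B2 \<subseteq> cgg_edges G2" unfolding B2_def by blast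
    fix M assume SM: "SPM G2 M"
    show "B2 \<inter> M \<noteq> {}"
    proof
      assume em: "B2 \<inter> M = {}"
      have Msub: "M \<subseteq> cgg_edges G2" and cM: "card M = card G2 div 2"
        and Mpw: "\<forall>g\<in>M. \<forall>h\<in>M. g \<noteq> h \<longrightarrow> g \<inter> h = {} \<and> \<not> crosses g h"
        using SM unfolding SPM_def by auto
      have BM: "B \<inter> M = {}" using em Msub unfolding B2_def by blast
      have finM: "finite M" using Msub cgg_finite[of G2] finite_subset unfolding G2_def by blast
      have cM': "card M = card Q2 + 1" using cM cG2 eq2 ij jm by simp
      have MQ: "M \<inter> Q1 = {}"
      proof (rule ccontr)
        assume "M \<inter> Q1 \<noteq> {}" then obtain g where g: "g \<in> M" "g \<in> Q1" by blast
        then have "g \<subseteq> G2" "g \<subseteq> {i<..<j}" "g \<noteq> {}"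
          using Msub cgg_sub ne2 unfolding Q1_def by blast+
        then show False using G2dis by blast
      qed
      have Mdis: "g \<inter> {i<..<j} = {}" if "g \<in> M" for g
        using that Msub cgg_sub G2dis by blast
      have pw: "\<forall>g\<in>M \<union> Q1. \<forall>h\<in>M \<union> Q1. g \<noteq> h \<longrightarrow> g \<inter> h = {} \<and> \<not> crosses g h"
      proof (intro ballI impI)
        fix g h assume g: "g \<in> M \<union> Q1" and h: "h \<in> M \<union> Q1" and gh: "g \<noteq> h"
        show "g \<inter> h = {} \<and> \<not> crosses g h"
        proof (cases "g \<in> M")
          case gM: True
          show ?thesis
          proof (cases "h \<in> M")
            case True then show ?thesis using Mpw gM gh by blast
          next
            case False
            then have "h \<in> Q1" using h by blast
            then have hh: "h \<subseteq> {i<..<j}" unfolding Q1_def by blast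
            have gg: "g \<inter> {i<..<j} = {}" using Mdis gM by blast
            show ?thesis using sep2[OF gg hh] gg hh by blast
          qed
        next
          case gM: False
          then have gQ: "g \<in> Q1" using g by blast
          then have gg: "g \<subseteq> {i<..<j}" unfolding Q1_def by blast
          show ?thesis
          proof (cases "h \<in> M")
            case True
            have hh: "h \<inter> {i<..<j} = {}" using True Mdis by blast
            show ?thesis using sep2[OF hh gg] crosses_sym gg hh by blast
          next
            case False
            then have "h \<in> Q1" using h by blast
            then show ?thesis using gQ Qpw gh unfolding Q1_def by blast
          qed
        qed
      qed
      have SU: "SPM {0..<2*m} (M \<union> Q1)"
      proof -
        have "M \<union> Q1 \<subseteq> cgg_edges {0..<2*m}" using Msub cgg_mono[OF G2sub] Q1Q Qsub by blast
        moreover have "card (M \<union> Q1) = card {0..<2*m} div 2"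
          using card_Un_disjoint[OF finM finQ1 MQ] cM' eqm by simp
        ultimately show ?thesis unfolding SPM_def using pw by blast
      qed
      then have "B \<inter> (M \<union> Q1) \<noteq> {}" using blk unfolding blocking_set_def by blast
      then obtain g where "g \<in> B" "g \<in> Q1" using BM by blast
      then have "g = e" "g \<subseteq> {i<..<j}" using uniq Q1Q unfolding Q1_def by blast+
      then show False using e_def ij by auto
    qed
  qed
  have sm1: "smono (card Q1 + 1) (\<lambda>a. i + a)" by (simp add: smono_def)
  have im1: "(\<lambda>a. i+a) ` {0..<2*(card Q1+1)} = {i..j}"
  proof
    show "(\<lambda>a. i+a) ` {0..<2*(card Q1+1)} \<subseteq> {i..j}" using eq1 ij by auto
    show "{i..j} \<subseteq> (\<lambda>a. i+a) ` {0..<2*(card Q1+1)}"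
    proof
      fix x assume x: "x \<in> {i..j}"
      show "x \<in> (\<lambda>a. i+a) ` {0..<2*(card Q1+1)}"
        by (rule image_eqI[of _ _ "x-i"]) (use x eq1 ij in auto)
    qed
  qed
  have lb1: "card Q1 + 1 \<le> card B1" using lower[OF sm1, of B1] bs1 im1 by simp
  define f2 where "f2 a = (if a \<le> i then a else a + (j-i-1))" for a
  have sm2: "smono (card Q2 + 1) f2" unfolding smono_def f2_def using ij by auto
  have im2: "f2 ` {0..<2*(card Q2+1)} = G2"
  proof
    show "f2 ` {0..<2*(card Q2+1)} \<subseteq> G2"
    proof
      fix y assume "y \<in> f2 ` {0..<2*(card Q2+1)}"
      then obtain a where a: "a < 2*(card Q2+1)" "y = f2 a" by auto
      show "y \<in> G2"
      proof (cases "a \<le> i")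
        case True then show ?thesis using a unfolding f2_def G2_def by auto
      next
        case False then show ?thesis using a eq2 ij jm unfolding f2_def G2_def by auto
      qed
    qed
    show "G2 \<subseteq> f2 ` {0..<2*(card Q2+1)}"
    proof
      fix x assume x: "x \<in> G2"
      show "x \<in> f2 ` {0..<2*(card Q2+1)}"
      proof (cases "x \<le> i")
        case True
        show ?thesis by (rule image_eqI[of _ _ x]) (use True eq2 ij jm in \<open>auto simp: f2_def\<close>)
      next
        case False
        then have xj: "j \<le> x" "x < 2*m" using x unfolding G2_def by auto
        show ?thesis by (rule image_eqI[of _ _ "x - (j-i-1)"]) (use xj eq2 ij jm in \<open>auto simp: f2_def\<close>)
      qed
    qed
  qed
  have lb2: "card Q2 + 1 \<le> card B2" using lower[OF sm2, of B2] bs2 im2 by simp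
  have B12: "B1 \<inter> B2 \<subseteq> {e}"
  proof
    fix g assume g: "g \<in> B1 \<inter> B2"
    then obtain a b where ab: "g = {a,b}" "a<b" "a \<in> {i..j}" "b \<in> {i..j}"
      using cgg_E unfolding B1_def by blast
    have "g \<subseteq> G2" using g cgg_sub unfolding B2_def by blast
    then have "a \<in> G2" "b \<in> G2" using ab by auto
    then have "a = i" "b = j" using ab ij unfolding G2_def by auto
    then show "g \<in> {e}" using ab e_def by simp
  qed
  have finB1: "finite B1" and finB2: "finite B2" using finB unfolding B1_def B2_def by auto
  have cUI: "card (B1 \<union> B2) + card (B1 \<inter> B2) = card B1 + card B2" using card_Un_Int[OF finB1 finB2] by simp
  have sUB: "B1 \<union> B2 \<subseteq> B" unfolding B1_def B2_def by blast
  have cU: "card (B1 \<union> B2) \<le> m" using card_mono[OF finB sUB] cardB by simp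
  have cI: "card (B1 \<inter> B2) \<le> 1" using card_mono[OF _ B12] by simp
  have cB1: "card B1 = card Q1 + 1" and cB2: "card B2 = card Q2 + 1" and cUm: "card (B1 \<union> B2) = m"
    using cUI cU cI lb1 lb2 eqm by arith+
  have BU: "B1 \<union> B2 = B" using card_subset_eq[OF finB sUB] cUm cardB by simp
  have nc: "\<forall>f\<in>B. \<not> crosses f {i,j}"
  proof
    fix f assume "f \<in> B"
    then have "f \<in> B1 \<or> f \<in> B2" using BU by blast
    then show "\<not> crosses f {i,j}"
    proof
      assume "f \<in> B1" then have "f \<subseteq> {i..j}" using cgg_sub unfolding B1_def by blast
      then show ?thesis using sep3 ij by blast
    next
      assume "f \<in> B2" then have "f \<subseteq> G2" using cgg_sub unfolding B2_def by blast
      then have "f \<inter> {i<..<j} = {}" using G2dis by blast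
      then show ?thesis using sep4 ij by blast
    qed
  qed
  have v1: "(j-i-1) div 2 + 1 = card Q1 + 1" using eq1 by simp
  have v2: "(2*m-(j-i)-1) div 2 + 1 = card Q2 + 1" using eq2 ij by simp
  show ?thesis using oddji bs1 bs2 cB1 cB2 v1 v2 nc unfolding B1_def B2_def G2_def by simp
qed


theorem mainTheorem11:
  fixes m i j :: nat and B :: "nat set set"
  assumes "m \<ge> 2"
    and "blocker {0..<2*m} B"
    and "i < j" and "j \<le> 2*m - 1"
    and "{i, j} \<in> B"
  shows "(\<exists>k l. j - i - 1 = 2*k \<and> 2*m - (j - i) - 1 = 2*l \<and> k + l = m - 1 \<and>
            blocking_set {i..j} (B \<inter> cgg_edges {i..j}) \<and>
            card (B \<inter> cgg_edges {i..j}) = k + 1 \<and>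
            blocking_set ({j..<2*m} \<union> {0..i}) (B \<inter> cgg_edges ({j..<2*m} \<union> {0..i})) \<and>
            card (B \<inter> cgg_edges ({j..<2*m} \<union> {0..i})) = l + 1)
         \<and> (\<forall>f\<in>B. \<not> crosses f {i, j})
         \<and> (\<forall>f\<in>B. \<forall>g\<in>B. \<not> crosses f g)"
proof -
  note c = core[OF assms]
  have od: "odd (j - i)" using c by (rule conjunct1)
  have cb1: "blocking_set {i..j} (B \<inter> cgg_edges {i..j})" using c by (elim conjE)
  have cb2: "blocking_set ({j..<2*m} \<union> {0..i}) (B \<inter> cgg_edges ({j..<2*m} \<union> {0..i}))"
    using c by (elim conjE)
  define K where "K = (j - i - 1) div 2"
  define L where "L = (2*m - (j - i) - 1) div 2"
  have cc1: "card (B \<inter> cgg_edges {i..j}) = K + 1" using c unfolding K_def by (elim conjE)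
  have cc2: "card (B \<inter> cgg_edges ({j..<2*m} \<union> {0..i})) = L + 1" using c unfolding L_def by (elim conjE)
  have ncr: "\<forall>f\<in>B. \<not> crosses f {i, j}" using c by (elim conjE)
  obtain q where q: "j - i = 2*q+1" using od oddE by blast
  have e1: "j - i - 1 = 2*K" unfolding K_def using q by simp
  have e2': "2*m - (j - i) - 1 = 2*(m - q - 1)" using q assms(3,4) by linarith
  have e2: "2*m - (j - i) - 1 = 2*L" unfolding L_def e2' by simp
  have e3: "K + L = m - 1" using e1 e2 assms(3,4) by linarith
  have p1: "\<exists>k l. j - i - 1 = 2*k \<and> 2*m - (j - i) - 1 = 2*l \<and> k + l = m - 1 \<and>
            blocking_set {i..j} (B \<inter> cgg_edges {i..j}) \<and>
            card (B \<inter> cgg_edges {i..j}) = k + 1 \<and>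
            blocking_set ({j..<2*m} \<union> {0..i}) (B \<inter> cgg_edges ({j..<2*m} \<union> {0..i})) \<and>
            card (B \<inter> cgg_edges ({j..<2*m} \<union> {0..i})) = l + 1"
    by (rule exI[of _ K], rule exI[of _ L]) (intro conjI e1 e2 e3 cb1 cb2 cc1 cc2)
  have p3: "\<forall>f\<in>B. \<forall>g\<in>B. \<not> crosses f g"
  proof (intro ballI)
    fix f g assume f: "f \<in> B" and g: "g \<in> B"
    have "B \<subseteq> cgg_edges {0..<2*m}" using assms(2) unfolding blocker_def blocking_set_def by blast
    then have "f \<in> cgg_edges {0..<2*m}" using f by blast
    then obtain a b where ab: "f = {a,b}" "a<b" "a \<in> {0..<2*m}" "b \<in> {0..<2*m}" using cgg_E by blast
    have bm: "b \<le> 2*m - 1" using ab by auto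
    have fB: "{a,b} \<in> B" using f ab(1) by simp
    have "\<forall>g\<in>B. \<not> crosses g {a,b}" using core[OF assms(1,2) ab(2) bm fB] by (elim conjE)
    then have "\<not> crosses g f" using g ab(1) by simp
    then show "\<not> crosses f g" using crosses_sym by blast
  qed
  show ?thesis using p1 ncr p3 by (intro conjI)
qed

end
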